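(* Consider the linear model $y=\mathbf{x}\beta_o+\varepsilon$, where $\mathbf{x}$ is a random $1\times p$ row vector with $\mathbb{E}[\mathbf{x}]=0$, $y$ is a scalar and $\beta_o\in\mathbb{R}^p$ is nonrandom. Assume: (i) $\beta_o\in[-C_b,C_b]^p$ for a constant $0<C_b<\infty$ not depending on $p$; (ii) $\mathbb{E}[\varepsilon\mid\mathbf{x}]=0$ almost surely; (iii) there exist constants $B>0$ and $d>2$ such that, uniformly in $n$, $\mathbb{E}[|\varepsilon|^d\mid\mathbf{x}]\le B$ a.s., $\mathbb{E}[|\mathbf{x}\tau|^d]\le B$ and $B^{-1}\le\mathbb{E}[|\mathbf{x}\tau|^2]$ for all $\tau\in\mathcal{S}_p$. Then, for $m\in\mathcal{M}_k$, $\delta\in\Delta$, $Q_o(m\delta)=\widetilde{Q}_o(m\delta)+O(\|b_k\|/\sqrt{p})$, and $\widetilde{Q}_o(m\delta)$ is uniquely minimised (as a function of the product $m\delta$) at $m\delta=m_o\delta_o$.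
   Context: $\|\cdot\|$ is the Euclidean norm for vectors and the spectral norm for matrices; $\mathcal{S}_p=\{\tau\in\mathbb{R}^p:\|\tau\|=1\}$. $\mathcal{M}_k$ ($1\le k\le p$) is the set of $p\times k$ binary matrices each of whose rows has exactly one entry equal to $1$ (assignment of the $p$ coordinates to $k$ groups; column sums are group sizes); standing condition: group sizes induced by every $m\in\mathcal{M}_k$ are bounded above by a constant $M$ and away from zero uniformly in $p$. $\Delta\subset\mathbb{R}^k$. $(m_o,\delta_o)$ minimises $\|m\delta-\beta_o\|^2$ over $m\in\mathcal{M}_k,\delta\in\Delta$ (defined up to relabelling of groups), and $b_k:=\beta_o-m_o\delta_o$. $Q_o(m\delta):=\mathbb{E}[(y-\mathbf{x}m\delta)^2]/p$, $\sigma^2:=\mathbb{E}[\varepsilon^2]$, and $\widetilde{Q}_o(m\delta):=(m\delta-m_o\delta_o)'\mathbb{E}[\mathbf{x}'\mathbf{x}](m\delta-m_o\delta_o)/p+\sigma^2/p$. *)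

theory Defs
  imports "HOL-Probability.Probability"
begin

text \<open>Vectors in R^p are represented as functions nat => real, only indices i < p matter.
  A p x k matrix is a function nat => nat => real, with entries outside the index range zero.\<close>

definition vnorm :: "nat \<Rightarrow> (nat \<Rightarrow> real) \<Rightarrow> real" where
  "vnorm p v = sqrt (\<Sum>i<p. (v i)\<^sup>2)"

definition rowdot :: "nat \<Rightarrow> (nat \<Rightarrow> real) \<Rightarrow> (nat \<Rightarrow> real) \<Rightarrow> real" where
  "rowdot p x v = (\<Sum>i<p. x i * v i)"

definition matvec :: "nat \<Rightarrow> (nat \<Rightarrow> nat \<Rightarrow> real) \<Rightarrow> (nat \<Rightarrow> real) \<Rightarrow> (nat \<Rightarrow> real)" where
  "matvec k m \<delta> = (\<lambda>i. \<Sum>j<k. m i j * \<delta> j)"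

text \<open>The set M_k of p x k binary assignment matrices (each row has exactly one entry 1),
  with the standing condition that every group size (column sum) lies in [1, M].\<close>
definition Mk :: "nat \<Rightarrow> nat \<Rightarrow> real \<Rightarrow> (nat \<Rightarrow> nat \<Rightarrow> real) set" where
  "Mk p k M = {m. (\<forall>i j. m i j = 0 \<or> m i j = 1)
               \<and> (\<forall>i j. (p \<le> i \<or> k \<le> j) \<longrightarrow> m i j = 0)
               \<and> (\<forall>i<p. card {j. j < k \<and> m i j = 1} = 1)
               \<and> (\<forall>j<k. 1 \<le> (\<Sum>i<p. m i j) \<and> (\<Sum>i<p. m i j) \<le> M)}"

definition sigma_x :: "'a measure \<Rightarrow> nat \<Rightarrow> ('a \<Rightarrow> nat \<Rightarrow> real) \<Rightarrow> 'a measure" where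
  "sigma_x Pr p x = vimage_algebra (space Pr) (\<lambda>\<omega>. restrict (x \<omega>) {..<p}) (PiM {..<p} (\<lambda>_. borel))"

definition lin_model ::
  "'a measure \<Rightarrow> nat \<Rightarrow> ('a \<Rightarrow> nat \<Rightarrow> real) \<Rightarrow> ('a \<Rightarrow> real) \<Rightarrow> ('a \<Rightarrow> real)
    \<Rightarrow> (nat \<Rightarrow> real) \<Rightarrow> real \<Rightarrow> real \<Rightarrow> real \<Rightarrow> bool" where
  "lin_model Pr p x \<epsilon> y \<beta> Cb B d \<longleftrightarrow>
     prob_space Pr
   \<and> (\<forall>i<p. (\<lambda>\<omega>. x \<omega> i) \<in> borel_measurable Pr)
   \<and> \<epsilon> \<in> borel_measurable Pr
   \<and> (\<forall>\<omega>\<in>space Pr. y \<omega> = rowdot p (x \<omega>) \<beta> + \<epsilon> \<omega>)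
   \<and> (\<forall>i<p. (\<integral>\<omega>. x \<omega> i \<partial>Pr) = 0)
   \<and> (\<forall>i<p. \<bar>\<beta> i\<bar> \<le> Cb)
   \<and> integrable Pr \<epsilon>
   \<and> (AE \<omega> in Pr. real_cond_exp Pr (sigma_x Pr p x) \<epsilon> \<omega> = 0)
   \<and> (AE \<omega> in Pr. nn_cond_exp Pr (sigma_x Pr p x) (\<lambda>\<omega>. ennreal (\<bar>\<epsilon> \<omega>\<bar> powr d)) \<omega> \<le> ennreal B)
   \<and> (\<forall>\<tau>. vnorm p \<tau> = 1 \<longrightarrow>
         (\<integral>\<^sup>+\<omega>. ennreal (\<bar>rowdot p (x \<omega>) \<tau>\<bar> powr d) \<partial>Pr) \<le> ennreal B
       \<and> ennreal (1 / B) \<le> (\<integral>\<^sup>+\<omega>. ennreal (\<bar>rowdot p (x \<omega>) \<tau>\<bar>\<^sup>2) \<partial>Pr))"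

definition Qo :: "'a measure \<Rightarrow> nat \<Rightarrow> ('a \<Rightarrow> nat \<Rightarrow> real) \<Rightarrow> ('a \<Rightarrow> real) \<Rightarrow> (nat \<Rightarrow> real) \<Rightarrow> real" where
  "Qo Pr p x y v = (\<integral>\<omega>. (y \<omega> - rowdot p (x \<omega>) v)\<^sup>2 \<partial>Pr) / real p"

definition Qt :: "'a measure \<Rightarrow> nat \<Rightarrow> ('a \<Rightarrow> nat \<Rightarrow> real) \<Rightarrow> ('a \<Rightarrow> real)
    \<Rightarrow> (nat \<Rightarrow> real) \<Rightarrow> (nat \<Rightarrow> real) \<Rightarrow> real" where
  "Qt Pr p x \<epsilon> w v =
     (\<Sum>i<p. \<Sum>j<p. (v i - w i) * (\<integral>\<omega>. x \<omega> i * x \<omega> j \<partial>Pr) * (v j - w j)) / real p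
     + (\<integral>\<omega>. (\<epsilon> \<omega>)\<^sup>2 \<partial>Pr) / real p"

end

theory Submission
  imports Defs
begin


lemma sq_le_powr:
  fixes t d :: real assumes "2 < d"
  shows "t\<^sup>2 \<le> 1 + \<bar>t\<bar> powr d"
proof (cases "\<bar>t\<bar> \<le> 1")
  case True
  then have "t\<^sup>2 \<le> 1" by (simp add: abs_le_square_iff[symmetric] abs_square_le_1)
  then show ?thesis by (smt (verit) powr_ge_zero)
next
  case False
  then have "\<bar>t\<bar> powr 2 \<le> \<bar>t\<bar> powr d" using assms by (intro powr_mono) auto
  moreover have "\<bar>t\<bar> powr 2 = t\<^sup>2" using False by (simp add: powr_numeral)
  ultimately show ?thesis by simp
qed

locale LM =
  fixes Pr :: "'a measure" and p :: nat and x :: "'a \<Rightarrow> nat \<Rightarrow> real" and \<epsilon> y :: "'a \<Rightarrow> real"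
    and \<beta> :: "nat \<Rightarrow> real" and Cb B d :: real
  assumes lm: "lin_model Pr p x \<epsilon> y \<beta> Cb B d" and d2: "2 < d" and Bpos: "0 < B"
begin

lemma ps: "prob_space Pr" using lm unfolding lin_model_def by blast

interpretation prob_space Pr by (rule ps)

lemma xmeas[measurable]: "i < p \<Longrightarrow> (\<lambda>\<omega>. x \<omega> i) \<in> borel_measurable Pr"
  using lm unfolding lin_model_def by blast

lemma emeas[measurable]: "\<epsilon> \<in> borel_measurable Pr"
  using lm unfolding lin_model_def by blast

lemma rowdot_meas[measurable]: "(\<lambda>\<omega>. rowdot p (x \<omega>) u) \<in> borel_measurable Pr"
  unfolding rowdot_def by (intro borel_measurable_sum) (simp add: xmeas)

lemma unit_sq:
  assumes "vnorm p \<tau> = 1"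
  shows "integrable Pr (\<lambda>\<omega>. (rowdot p (x \<omega>) \<tau>)\<^sup>2)" "(\<integral>\<omega>. (rowdot p (x \<omega>) \<tau>)\<^sup>2 \<partial>Pr) \<le> 1 + B"
proof -
  have bd: "(\<integral>\<^sup>+\<omega>. ennreal (\<bar>rowdot p (x \<omega>) \<tau>\<bar> powr d) \<partial>Pr) \<le> ennreal B"
    using lm assms unfolding lin_model_def by blast
  have "(\<integral>\<^sup>+\<omega>. ennreal ((rowdot p (x \<omega>) \<tau>)\<^sup>2) \<partial>Pr) \<le> (\<integral>\<^sup>+\<omega>. (ennreal 1 + ennreal (\<bar>rowdot p (x \<omega>) \<tau>\<bar> powr d)) \<partial>Pr)"
  proof (intro nn_integral_mono)
    fix \<omega>
    have "ennreal ((rowdot p (x \<omega>) \<tau>)\<^sup>2) \<le> ennreal (1 + \<bar>rowdot p (x \<omega>) \<tau>\<bar> powr d)"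
      by (intro ennreal_leI sq_le_powr[OF d2])
    also have "\<dots> = ennreal 1 + ennreal (\<bar>rowdot p (x \<omega>) \<tau>\<bar> powr d)"
      by (rule ennreal_plus) auto
    finally show "ennreal ((rowdot p (x \<omega>) \<tau>)\<^sup>2) \<le> ennreal 1 + ennreal (\<bar>rowdot p (x \<omega>) \<tau>\<bar> powr d)" .
  qed
  also have "\<dots> = ennreal 1 + (\<integral>\<^sup>+\<omega>. ennreal (\<bar>rowdot p (x \<omega>) \<tau>\<bar> powr d) \<partial>Pr)"
    by (subst nn_integral_add) (auto simp: emeasure_space_1)
  also have "\<dots> \<le> ennreal 1 + ennreal B" using bd by (intro add_left_mono)
  also have "\<dots> = ennreal (1 + B)" using Bpos by (simp add: ennreal_plus)
  finally have le: "(\<integral>\<^sup>+\<omega>. ennreal ((rowdot p (x \<omega>) \<tau>)\<^sup>2) \<partial>Pr) \<le> ennreal (1 + B)" .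
  show int: "integrable Pr (\<lambda>\<omega>. (rowdot p (x \<omega>) \<tau>)\<^sup>2)"
    by (rule integrableI_nonneg) (use le in \<open>auto intro: le_less_trans\<close>)
  have eq: "ennreal (\<integral>\<omega>. (rowdot p (x \<omega>) \<tau>)\<^sup>2 \<partial>Pr) = (\<integral>\<^sup>+\<omega>. ennreal ((rowdot p (x \<omega>) \<tau>)\<^sup>2) \<partial>Pr)"
    by (rule nn_integral_eq_integral[symmetric]) (use int in auto)
  have "ennreal (\<integral>\<omega>. (rowdot p (x \<omega>) \<tau>)\<^sup>2 \<partial>Pr) \<le> ennreal (1 + B)"
    unfolding eq by (rule le)
  then show "(\<integral>\<omega>. (rowdot p (x \<omega>) \<tau>)\<^sup>2 \<partial>Pr) \<le> 1 + B"
    using Bpos by (subst (asm) ennreal_le_iff) auto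
qed

definition nsq :: "(nat \<Rightarrow> real) \<Rightarrow> real" where "nsq u = (\<Sum>i<p. (u i)\<^sup>2)"

lemma nsq_nonneg: "0 \<le> nsq u" unfolding nsq_def by (simp add: sum_nonneg)

lemma vnorm_nsq: "vnorm p u = sqrt (nsq u)" unfolding vnorm_def nsq_def ..

lemma rowdot_scale: "rowdot p v (\<lambda>i. c * u i) = c * rowdot p v u"
  unfolding rowdot_def by (simp add: sum_distrib_left algebra_simps)

lemma rowdot_zero: "nsq u = 0 \<Longrightarrow> rowdot p v u = 0"
  unfolding nsq_def rowdot_def by (subst (asm) sum_nonneg_eq_0_iff) auto

lemma unit_of:
  assumes "nsq u \<noteq> 0"
  shows "vnorm p (\<lambda>i. u i / sqrt (nsq u)) = 1" "rowdot p v u = sqrt (nsq u) * rowdot p v (\<lambda>i. u i / sqrt (nsq u))"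
proof -
  have pos: "0 < nsq u" using assms nsq_nonneg[of u] by linarith
  have "(\<Sum>i<p. (u i / sqrt (nsq u))\<^sup>2) = (\<Sum>i<p. (u i)\<^sup>2) / nsq u"
    using pos by (simp add: power_divide sum_divide_distrib)
  also have "\<dots> = 1" using pos unfolding nsq_def by simp
  finally show "vnorm p (\<lambda>i. u i / sqrt (nsq u)) = 1" unfolding vnorm_def by simp
  have "rowdot p v u = rowdot p v (\<lambda>i. sqrt (nsq u) * (u i / sqrt (nsq u)))"
    using pos by simp
  then show "rowdot p v u = sqrt (nsq u) * rowdot p v (\<lambda>i. u i / sqrt (nsq u))"
    by (simp only: rowdot_scale)
qed

lemma gen_sq:
  shows "integrable Pr (\<lambda>\<omega>. (rowdot p (x \<omega>) u)\<^sup>2)" "(\<integral>\<omega>. (rowdot p (x \<omega>) u)\<^sup>2 \<partial>Pr) \<le> (1 + B) * nsq u"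
proof -
  have "integrable Pr (\<lambda>\<omega>. (rowdot p (x \<omega>) u)\<^sup>2) \<and> (\<integral>\<omega>. (rowdot p (x \<omega>) u)\<^sup>2 \<partial>Pr) \<le> (1 + B) * nsq u"
  proof (cases "nsq u = 0")
    case True
    then show ?thesis by (simp add: rowdot_zero)
  next
    case False
    define \<tau> where "\<tau> = (\<lambda>i. u i / sqrt (nsq u))"
    have u1: "vnorm p \<tau> = 1" and r: "\<And>v. rowdot p v u = sqrt (nsq u) * rowdot p v \<tau>"
      using unit_of[OF False] unfolding \<tau>_def by auto
    have eq: "(\<lambda>\<omega>. (rowdot p (x \<omega>) u)\<^sup>2) = (\<lambda>\<omega>. nsq u * (rowdot p (x \<omega>) \<tau>)\<^sup>2)"
      using nsq_nonneg[of u] by (simp add: r power_mult_distrib)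
    have "nsq u * (\<integral>\<omega>. (rowdot p (x \<omega>) \<tau>)\<^sup>2 \<partial>Pr) \<le> nsq u * (1 + B)"
      using unit_sq(2)[OF u1] nsq_nonneg[of u] by (rule mult_left_mono)
    then show ?thesis unfolding eq
      using unit_sq(1)[OF u1] by (simp add: mult.commute)
  qed
  then show "integrable Pr (\<lambda>\<omega>. (rowdot p (x \<omega>) u)\<^sup>2)" "(\<integral>\<omega>. (rowdot p (x \<omega>) u)\<^sup>2 \<partial>Pr) \<le> (1 + B) * nsq u"
    by auto
qed

lemma cross_aux:
  shows "integrable Pr (\<lambda>\<omega>. rowdot p (x \<omega>) u * rowdot p (x \<omega>) v)"
    "\<bar>\<integral>\<omega>. rowdot p (x \<omega>) u * rowdot p (x \<omega>) v \<partial>Pr\<bar> \<le> (1 + B) * (nsq u + nsq v) / 2"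
proof -
  have iu: "integrable Pr (\<lambda>\<omega>. (rowdot p (x \<omega>) u)\<^sup>2)" and iv: "integrable Pr (\<lambda>\<omega>. (rowdot p (x \<omega>) v)\<^sup>2)"
    using gen_sq by auto
  have isum: "integrable Pr (\<lambda>\<omega>. ((rowdot p (x \<omega>) u)\<^sup>2 + (rowdot p (x \<omega>) v)\<^sup>2) / 2)"
    using iu iv by auto
  have pw: "\<And>a b::real. \<bar>a * b\<bar> \<le> (a\<^sup>2 + b\<^sup>2) / 2"
  proof -
    fix a b :: real
    have "0 \<le> (\<bar>a\<bar> - \<bar>b\<bar>)\<^sup>2" by simp
    moreover have "(\<bar>a\<bar> - \<bar>b\<bar>)\<^sup>2 = a\<^sup>2 + b\<^sup>2 - 2 * \<bar>a * b\<bar>"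
      by (simp add: power2_eq_square algebra_simps abs_mult)
    ultimately show "\<bar>a * b\<bar> \<le> (a\<^sup>2 + b\<^sup>2) / 2" by simp
  qed
  show int: "integrable Pr (\<lambda>\<omega>. rowdot p (x \<omega>) u * rowdot p (x \<omega>) v)"
    by (rule Bochner_Integration.integrable_bound[OF isum]) (use pw in \<open>auto intro!: AE_I2\<close>)
  have "\<bar>\<integral>\<omega>. rowdot p (x \<omega>) u * rowdot p (x \<omega>) v \<partial>Pr\<bar> \<le> (\<integral>\<omega>. \<bar>rowdot p (x \<omega>) u * rowdot p (x \<omega>) v\<bar> \<partial>Pr)"
    by (rule integral_abs_bound)
  also have "\<dots> \<le> (\<integral>\<omega>. ((rowdot p (x \<omega>) u)\<^sup>2 + (rowdot p (x \<omega>) v)\<^sup>2) / 2 \<partial>Pr)"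
    by (intro integral_mono int isum pw integrable_abs)
  also have "\<dots> = ((\<integral>\<omega>. (rowdot p (x \<omega>) u)\<^sup>2 \<partial>Pr) + (\<integral>\<omega>. (rowdot p (x \<omega>) v)\<^sup>2 \<partial>Pr)) / 2"
    using iu iv by simp
  also have "\<dots> \<le> ((1 + B) * nsq u + (1 + B) * nsq v) / 2"
    using gen_sq(2)[of u] gen_sq(2)[of v] by simp
  finally show "\<bar>\<integral>\<omega>. rowdot p (x \<omega>) u * rowdot p (x \<omega>) v \<partial>Pr\<bar> \<le> (1 + B) * (nsq u + nsq v) / 2"
    by (simp add: algebra_simps)
qed

lemma cross:
  "\<bar>\<integral>\<omega>. rowdot p (x \<omega>) u * rowdot p (x \<omega>) v \<partial>Pr\<bar> \<le> (1 + B) * (sqrt (nsq u) * sqrt (nsq v))"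
proof (cases "nsq u = 0 \<or> nsq v = 0")
  case True
  then show ?thesis by (auto simp: rowdot_zero)
next
  case False
  define \<tau> where "\<tau> = (\<lambda>i. u i / sqrt (nsq u))"
  define \<sigma> where "\<sigma> = (\<lambda>i. v i / sqrt (nsq v))"
  have u1: "nsq \<tau> = 1" and r: "\<And>w. rowdot p w u = sqrt (nsq u) * rowdot p w \<tau>"
    using unit_of[of u] False unfolding \<tau>_def vnorm_nsq by auto
  have v1: "nsq \<sigma> = 1" and r2: "\<And>w. rowdot p w v = sqrt (nsq v) * rowdot p w \<sigma>"
    using unit_of[of v] False unfolding \<sigma>_def vnorm_nsq by auto
  have "(\<lambda>\<omega>. rowdot p (x \<omega>) u * rowdot p (x \<omega>) v) = (\<lambda>\<omega>. (sqrt (nsq u) * sqrt (nsq v)) * (rowdot p (x \<omega>) \<tau> * rowdot p (x \<omega>) \<sigma>))"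
    by (simp add: r r2 algebra_simps)
  then have "\<bar>\<integral>\<omega>. rowdot p (x \<omega>) u * rowdot p (x \<omega>) v \<partial>Pr\<bar> = (sqrt (nsq u) * sqrt (nsq v)) * \<bar>\<integral>\<omega>. rowdot p (x \<omega>) \<tau> * rowdot p (x \<omega>) \<sigma> \<partial>Pr\<bar>"
    by (simp add: abs_mult nsq_nonneg)
  also have "\<dots> \<le> (sqrt (nsq u) * sqrt (nsq v)) * (1 + B)"
    using cross_aux(2)[of \<tau> \<sigma>] u1 v1 nsq_nonneg[of u] nsq_nonneg[of v] by (intro mult_left_mono) auto
  finally show ?thesis by (simp add: mult.commute)
qed

lemma fmeas: "(\<lambda>\<omega>. restrict (x \<omega>) {..<p}) \<in> measurable Pr (PiM {..<p} (\<lambda>_. borel))"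
proof -
  have "(\<lambda>\<omega>. \<lambda>i\<in>{..<p}. (\<lambda>\<omega>. x \<omega> i) \<omega>) \<in> measurable Pr (PiM {..<p} (\<lambda>_. borel))"
    by (rule measurable_restrict) (simp add: xmeas)
  then show ?thesis by (simp add: restrict_def)
qed

lemma subalg: "subalgebra Pr (sigma_x Pr p x)"
proof -
  have fs: "(\<lambda>\<omega>. restrict (x \<omega>) {..<p}) \<in> space Pr \<rightarrow> space (PiM {..<p} (\<lambda>_. borel :: real measure))"
    using measurable_space[OF fmeas] by (rule funcsetI)
  show ?thesis unfolding subalgebra_def sigma_x_def
    using sets_vimage_algebra2[OF fs] measurable_sets[OF fmeas] by auto
qed

lemma xF: "i < p \<Longrightarrow> (\<lambda>\<omega>. x \<omega> i) \<in> borel_measurable (sigma_x Pr p x)"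
proof -
  assume i: "i < p"
  have fs: "(\<lambda>\<omega>. restrict (x \<omega>) {..<p}) \<in> space Pr \<rightarrow> space (PiM {..<p} (\<lambda>_. borel :: real measure))"
    using measurable_space[OF fmeas] by (rule funcsetI)
  have m1: "(\<lambda>\<omega>. restrict (x \<omega>) {..<p}) \<in> measurable (sigma_x Pr p x) (PiM {..<p} (\<lambda>_. borel))"
    unfolding sigma_x_def by (rule measurable_vimage_algebra1[OF fs])
  have "(\<lambda>\<omega>. (restrict (x \<omega>) {..<p}) i) \<in> borel_measurable (sigma_x Pr p x)"
    by (rule measurable_compose[OF m1 measurable_component_singleton]) (use i in auto)
  then show ?thesis using i by simp
qed

lemma rowdotF: "(\<lambda>\<omega>. rowdot p (x \<omega>) u) \<in> borel_measurable (sigma_x Pr p x)"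
  unfolding rowdot_def by (intro borel_measurable_sum borel_measurable_times borel_measurable_const) (auto intro: xF)

interpretation S: finite_measure_subalgebra Pr "sigma_x Pr p x"
  by unfold_locales (rule subalg)

lemma eps_moment: "(\<integral>\<^sup>+\<omega>. ennreal (\<bar>\<epsilon> \<omega>\<bar> powr d) \<partial>Pr) \<le> ennreal B"
proof -
  have ae: "AE \<omega> in Pr. nn_cond_exp Pr (sigma_x Pr p x) (\<lambda>\<omega>. ennreal (\<bar>\<epsilon> \<omega>\<bar> powr d)) \<omega> \<le> ennreal B"
    using lm unfolding lin_model_def by blast
  have "(\<integral>\<^sup>+\<omega>. ennreal (\<bar>\<epsilon> \<omega>\<bar> powr d) \<partial>Pr) = (\<integral>\<^sup>+\<omega>. 1 * ennreal (\<bar>\<epsilon> \<omega>\<bar> powr d) \<partial>Pr)" by simp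
  also have "\<dots> = (\<integral>\<^sup>+\<omega>. 1 * nn_cond_exp Pr (sigma_x Pr p x) (\<lambda>\<omega>. ennreal (\<bar>\<epsilon> \<omega>\<bar> powr d)) \<omega> \<partial>Pr)"
    by (rule S.nn_cond_exp_intg[symmetric]) auto
  also have "\<dots> \<le> (\<integral>\<^sup>+\<omega>. ennreal B \<partial>Pr)"
    using ae by (intro nn_integral_mono_AE) auto
  also have "\<dots> = ennreal B" by (simp add: emeasure_space_1)
  finally show ?thesis .
qed

lemma eps_sq: "integrable Pr (\<lambda>\<omega>. (\<epsilon> \<omega>)\<^sup>2)"
proof -
  have "(\<integral>\<^sup>+\<omega>. ennreal ((\<epsilon> \<omega>)\<^sup>2) \<partial>Pr) \<le> (\<integral>\<^sup>+\<omega>. (ennreal 1 + ennreal (\<bar>\<epsilon> \<omega>\<bar> powr d)) \<partial>Pr)"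
  proof (intro nn_integral_mono)
    fix \<omega>
    have "ennreal ((\<epsilon> \<omega>)\<^sup>2) \<le> ennreal (1 + \<bar>\<epsilon> \<omega>\<bar> powr d)"
      by (intro ennreal_leI sq_le_powr[OF d2])
    also have "\<dots> = ennreal 1 + ennreal (\<bar>\<epsilon> \<omega>\<bar> powr d)"
      by (rule ennreal_plus) auto
    finally show "ennreal ((\<epsilon> \<omega>)\<^sup>2) \<le> ennreal 1 + ennreal (\<bar>\<epsilon> \<omega>\<bar> powr d)" .
  qed
  also have "\<dots> = ennreal 1 + (\<integral>\<^sup>+\<omega>. ennreal (\<bar>\<epsilon> \<omega>\<bar> powr d) \<partial>Pr)"
    by (subst nn_integral_add) (auto simp: emeasure_space_1)
  also have "\<dots> \<le> ennreal 1 + ennreal B" using eps_moment by (intro add_left_mono)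
  also have "\<dots> < \<infinity>" by simp
  finally show ?thesis by (intro integrableI_nonneg) auto
qed

lemma eps_cross:
  shows "integrable Pr (\<lambda>\<omega>. rowdot p (x \<omega>) u * \<epsilon> \<omega>)" "(\<integral>\<omega>. rowdot p (x \<omega>) u * \<epsilon> \<omega> \<partial>Pr) = 0"
proof -
  have isum: "integrable Pr (\<lambda>\<omega>. ((rowdot p (x \<omega>) u)\<^sup>2 + (\<epsilon> \<omega>)\<^sup>2) / 2)"
    using gen_sq(1)[of u] eps_sq by auto
  have pw: "\<And>a b::real. \<bar>a * b\<bar> \<le> (a\<^sup>2 + b\<^sup>2) / 2"
  proof -
    fix a b :: real
    have "0 \<le> (\<bar>a\<bar> - \<bar>b\<bar>)\<^sup>2" by simp
    moreover have "(\<bar>a\<bar> - \<bar>b\<bar>)\<^sup>2 = a\<^sup>2 + b\<^sup>2 - 2 * \<bar>a * b\<bar>"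
      by (simp add: power2_eq_square algebra_simps abs_mult)
    ultimately show "\<bar>a * b\<bar> \<le> (a\<^sup>2 + b\<^sup>2) / 2" by simp
  qed
  show int: "integrable Pr (\<lambda>\<omega>. rowdot p (x \<omega>) u * \<epsilon> \<omega>)"
    by (rule Bochner_Integration.integrable_bound[OF isum]) (use pw in \<open>auto intro!: AE_I2\<close>)
  have ce: "AE \<omega> in Pr. real_cond_exp Pr (sigma_x Pr p x) \<epsilon> \<omega> = 0"
    using lm unfolding lin_model_def by blast
  have "(\<integral>\<omega>. rowdot p (x \<omega>) u * \<epsilon> \<omega> \<partial>Pr) = (\<integral>\<omega>. rowdot p (x \<omega>) u * real_cond_exp Pr (sigma_x Pr p x) \<epsilon> \<omega> \<partial>Pr)"
    by (rule S.real_cond_exp_intg(2)[symmetric]) (auto intro: int rowdotF)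
  also have "\<dots> = (\<integral>\<omega>. 0 \<partial>Pr)"
    by (rule integral_cong_AE) (use ce in \<open>auto\<close>)
  finally show "(\<integral>\<omega>. rowdot p (x \<omega>) u * \<epsilon> \<omega> \<partial>Pr) = 0" by simp
qed

definition ev :: "nat \<Rightarrow> nat \<Rightarrow> real" where "ev i = (\<lambda>j. if j = i then 1 else 0)"

lemma rowdot_ev: "i < p \<Longrightarrow> rowdot p v (ev i) = v i"
  unfolding rowdot_def ev_def by (simp add: if_distrib cong: if_cong)

lemma xx_int: "i < p \<Longrightarrow> j < p \<Longrightarrow> integrable Pr (\<lambda>\<omega>. x \<omega> i * x \<omega> j)"
  using cross_aux(1)[of "ev i" "ev j"] by (simp add: rowdot_ev)

lemma gram:
  "(\<integral>\<omega>. rowdot p (x \<omega>) a * rowdot p (x \<omega>) b \<partial>Pr)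
     = (\<Sum>i<p. \<Sum>j<p. a i * (\<integral>\<omega>. x \<omega> i * x \<omega> j \<partial>Pr) * b j)"
proof -
  have "\<And>\<omega>. rowdot p (x \<omega>) a * rowdot p (x \<omega>) b = (\<Sum>i<p. \<Sum>j<p. a i * b j * (x \<omega> i * x \<omega> j))"
    unfolding rowdot_def by (simp add: sum_product algebra_simps)
  then have "(\<integral>\<omega>. rowdot p (x \<omega>) a * rowdot p (x \<omega>) b \<partial>Pr) = (\<integral>\<omega>. (\<Sum>i<p. \<Sum>j<p. a i * b j * (x \<omega> i * x \<omega> j)) \<partial>Pr)"
    by simp
  also have "\<dots> = (\<Sum>i<p. (\<integral>\<omega>. (\<Sum>j<p. a i * b j * (x \<omega> i * x \<omega> j)) \<partial>Pr))"
    by (rule Bochner_Integration.integral_sum) (auto intro!: integrable_sum integrable_mult_right xx_int)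
  also have "\<dots> = (\<Sum>i<p. \<Sum>j<p. (\<integral>\<omega>. a i * b j * (x \<omega> i * x \<omega> j) \<partial>Pr))"
    by (intro sum.cong refl Bochner_Integration.integral_sum) (auto intro!: integrable_mult_right xx_int)
  also have "\<dots> = (\<Sum>i<p. \<Sum>j<p. a i * b j * (\<integral>\<omega>. x \<omega> i * x \<omega> j \<partial>Pr))"
    by simp
  finally show ?thesis by (simp add: algebra_simps)
qed

lemma unit_lower:
  assumes "vnorm p \<tau> = 1"
  shows "1 / B \<le> (\<integral>\<omega>. (rowdot p (x \<omega>) \<tau>)\<^sup>2 \<partial>Pr)"
proof -
  have lb: "ennreal (1 / B) \<le> (\<integral>\<^sup>+\<omega>. ennreal (\<bar>rowdot p (x \<omega>) \<tau>\<bar>\<^sup>2) \<partial>Pr)"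
    using lm assms unfolding lin_model_def by blast
  have eq: "(\<integral>\<^sup>+\<omega>. ennreal ((rowdot p (x \<omega>) \<tau>)\<^sup>2) \<partial>Pr) = ennreal (\<integral>\<omega>. (rowdot p (x \<omega>) \<tau>)\<^sup>2 \<partial>Pr)"
    by (rule nn_integral_eq_integral) (use unit_sq(1)[OF assms] in auto)
  have "ennreal (1 / B) \<le> ennreal (\<integral>\<omega>. (rowdot p (x \<omega>) \<tau>)\<^sup>2 \<partial>Pr)"
    using lb unfolding eq[symmetric] by simp
  then show ?thesis by (subst (asm) ennreal_le_iff) auto
qed

lemma quad_pos:
  assumes "0 < nsq u"
  shows "0 < (\<integral>\<omega>. (rowdot p (x \<omega>) u)\<^sup>2 \<partial>Pr)"
proof -
  define \<tau> where "\<tau> = (\<lambda>i. u i / sqrt (nsq u))"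
  have u1: "vnorm p \<tau> = 1" and r: "\<And>v. rowdot p v u = sqrt (nsq u) * rowdot p v \<tau>"
    using unit_of[of u] assms unfolding \<tau>_def by auto
  have eq: "(\<lambda>\<omega>. (rowdot p (x \<omega>) u)\<^sup>2) = (\<lambda>\<omega>. nsq u * (rowdot p (x \<omega>) \<tau>)\<^sup>2)"
    using nsq_nonneg[of u] by (simp add: r power_mult_distrib)
  have "0 < 1 / B" using Bpos by simp
  also have "\<dots> \<le> (\<integral>\<omega>. (rowdot p (x \<omega>) \<tau>)\<^sup>2 \<partial>Pr)" by (rule unit_lower[OF u1])
  finally show ?thesis unfolding eq using assms by simp
qed

end
context LM begin
interpretation prob_space Pr by (rule ps)
interpretation S: finite_measure_subalgebra Pr "sigma_x Pr p x" by unfold_locales (rule subalg)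
lemma rowdot_split: "rowdot p X \<beta>' - rowdot p X v = rowdot p X (\<lambda>i. \<beta>' i - w i) + rowdot p X (\<lambda>i. w i - v i)"
  unfolding rowdot_def by (simp add: sum_subtractf[symmetric] sum.distrib[symmetric] algebra_simps)

lemma rowdot_neg: "rowdot p X (\<lambda>i. v i - w i) = - rowdot p X (\<lambda>i. w i - v i)"
  unfolding rowdot_def by (simp add: sum_negf[symmetric] algebra_simps)

lemma decomp:
  fixes v w :: "nat \<Rightarrow> real"
  defines "A \<equiv> \<lambda>\<omega>. rowdot p (x \<omega>) (\<lambda>i. \<beta> i - w i)"
  defines "D \<equiv> \<lambda>\<omega>. rowdot p (x \<omega>) (\<lambda>i. w i - v i)"
  shows "Qo Pr p x y v - Qt Pr p x \<epsilon> w v = ((\<integral>\<omega>. A \<omega> * A \<omega> \<partial>Pr) + 2 * (\<integral>\<omega>. A \<omega> * D \<omega> \<partial>Pr)) / real p"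
proof -
  have yeq: "\<And>\<omega>. \<omega> \<in> space Pr \<Longrightarrow> y \<omega> = rowdot p (x \<omega>) \<beta> + \<epsilon> \<omega>"
    using lm unfolding lin_model_def by blast
  have pt: "\<And>\<omega>. \<omega> \<in> space Pr \<Longrightarrow> (y \<omega> - rowdot p (x \<omega>) v)\<^sup>2 =
      A \<omega> * A \<omega> + D \<omega> * D \<omega> + (\<epsilon> \<omega>)\<^sup>2 + 2 * (A \<omega> * D \<omega>) + 2 * (A \<omega> * \<epsilon> \<omega>) + 2 * (D \<omega> * \<epsilon> \<omega>)"
  proof -
    fix \<omega> assume "\<omega> \<in> space Pr"
    then have "y \<omega> - rowdot p (x \<omega>) v = A \<omega> + D \<omega> + \<epsilon> \<omega>"
      using yeq rowdot_split[of "x \<omega>" \<beta> v w] unfolding A_def D_def by simp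
    then show "(y \<omega> - rowdot p (x \<omega>) v)\<^sup>2 =
      A \<omega> * A \<omega> + D \<omega> * D \<omega> + (\<epsilon> \<omega>)\<^sup>2 + 2 * (A \<omega> * D \<omega>) + 2 * (A \<omega> * \<epsilon> \<omega>) + 2 * (D \<omega> * \<epsilon> \<omega>)"
      by (simp add: power2_eq_square algebra_simps)
  qed
  have i1: "integrable Pr (\<lambda>\<omega>. A \<omega> * A \<omega>)" "integrable Pr (\<lambda>\<omega>. D \<omega> * D \<omega>)" "integrable Pr (\<lambda>\<omega>. A \<omega> * D \<omega>)"
    unfolding A_def D_def by (rule cross_aux(1))+
  have i2: "integrable Pr (\<lambda>\<omega>. A \<omega> * \<epsilon> \<omega>)" "integrable Pr (\<lambda>\<omega>. D \<omega> * \<epsilon> \<omega>)"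
    unfolding A_def D_def by (rule eps_cross(1))+
  have z: "(\<integral>\<omega>. A \<omega> * \<epsilon> \<omega> \<partial>Pr) = 0" "(\<integral>\<omega>. D \<omega> * \<epsilon> \<omega> \<partial>Pr) = 0"
    unfolding A_def D_def by (rule eps_cross(2))+
  have "(\<integral>\<omega>. (y \<omega> - rowdot p (x \<omega>) v)\<^sup>2 \<partial>Pr) =
     (\<integral>\<omega>. A \<omega> * A \<omega> + D \<omega> * D \<omega> + (\<epsilon> \<omega>)\<^sup>2 + 2 * (A \<omega> * D \<omega>) + 2 * (A \<omega> * \<epsilon> \<omega>) + 2 * (D \<omega> * \<epsilon> \<omega>) \<partial>Pr)"
    by (rule Bochner_Integration.integral_cong[OF refl pt])
  also have "\<dots> = (\<integral>\<omega>. A \<omega> * A \<omega> \<partial>Pr) + (\<integral>\<omega>. D \<omega> * D \<omega> \<partial>Pr) + (\<integral>\<omega>. (\<epsilon> \<omega>)\<^sup>2 \<partial>Pr)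
      + 2 * (\<integral>\<omega>. A \<omega> * D \<omega> \<partial>Pr) + 2 * (\<integral>\<omega>. A \<omega> * \<epsilon> \<omega> \<partial>Pr) + 2 * (\<integral>\<omega>. D \<omega> * \<epsilon> \<omega> \<partial>Pr)"
  proof -
    have ii: "integrable Pr (\<lambda>\<omega>. 2 * (A \<omega> * D \<omega>))" "integrable Pr (\<lambda>\<omega>. 2 * (A \<omega> * \<epsilon> \<omega>))"
      "integrable Pr (\<lambda>\<omega>. 2 * (D \<omega> * \<epsilon> \<omega>))" using i1 i2 by auto
    note ia = Bochner_Integration.integrable_add
    show ?thesis
      apply (subst Bochner_Integration.integral_add, (intro ia i1 i2 eps_sq ii)+)+
      using ii by (simp only: integral_mult_right_zero)
  qed
  finally have qo: "Qo Pr p x y v = ((\<integral>\<omega>. A \<omega> * A \<omega> \<partial>Pr) + (\<integral>\<omega>. D \<omega> * D \<omega> \<partial>Pr) + (\<integral>\<omega>. (\<epsilon> \<omega>)\<^sup>2 \<partial>Pr)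
      + 2 * (\<integral>\<omega>. A \<omega> * D \<omega> \<partial>Pr)) / real p"
    unfolding Qo_def using z by simp
  have "(\<Sum>i<p. \<Sum>j<p. (v i - w i) * (\<integral>\<omega>. x \<omega> i * x \<omega> j \<partial>Pr) * (v j - w j))
      = (\<integral>\<omega>. rowdot p (x \<omega>) (\<lambda>i. v i - w i) * rowdot p (x \<omega>) (\<lambda>i. v i - w i) \<partial>Pr)"
    by (rule gram[symmetric])
  also have "\<dots> = (\<integral>\<omega>. D \<omega> * D \<omega> \<partial>Pr)"
    unfolding D_def by (simp only: rowdot_neg[of _ v w] minus_mult_minus)
  finally have qt: "Qt Pr p x \<epsilon> w v = (\<integral>\<omega>. D \<omega> * D \<omega> \<partial>Pr) / real p + (\<integral>\<omega>. (\<epsilon> \<omega>)\<^sup>2 \<partial>Pr) / real p"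
    unfolding Qt_def by simp
  show ?thesis unfolding qo qt by (simp add: add_divide_distrib diff_divide_distrib)
qed

end


lemma matvec_bd:
  assumes m: "m \<in> Mk p k M" and d: "\<forall>j<k. \<bar>\<delta> j\<bar> \<le> c" and i: "i < p"
  shows "\<bar>matvec k m \<delta> i\<bar> \<le> c"
proof -
  have c1: "card {j. j < k \<and> m i j = 1} = 1" and z: "\<forall>i j. m i j = 0 \<or> m i j = 1"
    using m i unfolding Mk_def by auto
  then obtain j0 where S: "{j. j < k \<and> m i j = 1} = {j0}" by (metis card_1_singletonE)
  then have j0: "j0 < k" "m i j0 = 1" by auto
  have "matvec k m \<delta> i = (\<Sum>j\<in>{j0}. m i j * \<delta> j)"
    unfolding matvec_def
  proof (rule sum.mono_neutral_right)
    show "{j0} \<subseteq> {..<k}" using j0 by auto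
    show "\<forall>j\<in>{..<k} - {j0}. m i j * \<delta> j = 0"
    proof
      fix j assume "j \<in> {..<k} - {j0}"
      then have "m i j \<noteq> 1" using S by auto
      then have "m i j = 0" using z by metis
      then show "m i j * \<delta> j = 0" by simp
    qed
  qed auto
  also have "\<dots> = \<delta> j0" using j0 by simp
  finally show ?thesis using d j0 by simp
qed

lemma matvec_out:
  assumes m: "m \<in> Mk p k M" and i: "p \<le> i"
  shows "matvec k m \<delta> i = 0"
  using m i unfolding Mk_def matvec_def by auto

lemma nsq_bound:
  assumes "\<And>i. i < p \<Longrightarrow> \<bar>u i\<bar> \<le> c"
  shows "sqrt (\<Sum>i<p. (u i)\<^sup>2) \<le> sqrt (real p) * c"
proof -
  have c0: "0 \<le> c" if "0 < p" using assms[of 0] that by auto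
  have "(\<Sum>i<p. (u i)\<^sup>2) \<le> (\<Sum>i<p. c\<^sup>2)"
  proof (intro sum_mono)
    fix i assume "i \<in> {..<p}"
    then have "\<bar>u i\<bar> \<le> c" using assms by auto
    then show "(u i)\<^sup>2 \<le> c\<^sup>2" by (metis abs_ge_zero abs_le_square_iff order_trans abs_of_nonneg)
  qed
  then have "sqrt (\<Sum>i<p. (u i)\<^sup>2) \<le> sqrt (real p * c\<^sup>2)" by (intro real_sqrt_le_mono) simp
  also have "\<dots> = sqrt (real p) * c"
    by (cases "p = 0") (auto simp: real_sqrt_mult c0)
  finally show ?thesis .
qed

lemma cancel_s: "0 < (s::real) \<Longrightarrow> X * s / (s * s) = X / s"
  by (simp add: field_simps)

theorem theorem1:
  fixes Cb B d M C\<Delta> :: real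
  assumes "0 < Cb" and "0 < B" and "2 < d" and "0 \<le> C\<Delta>"
  shows "\<exists>C. \<forall>(Pr :: 'a measure) p k \<Delta> x \<epsilon> y \<beta> mo \<delta>o.
           ( lin_model Pr p x \<epsilon> y \<beta> Cb B d
           \<and> 1 \<le> k \<and> k \<le> p
           \<and> (\<forall>\<delta>\<in>\<Delta>. \<forall>j<k. \<bar>\<delta> j\<bar> \<le> C\<Delta>)
           \<and> mo \<in> Mk p k M \<and> \<delta>o \<in> \<Delta>
           \<and> (\<forall>m\<in>Mk p k M. \<forall>\<delta>\<in>\<Delta>.
                 (\<Sum>i<p. (matvec k mo \<delta>o i - \<beta> i)\<^sup>2) \<le> (\<Sum>i<p. (matvec k m \<delta> i - \<beta> i)\<^sup>2)) )
           \<longrightarrow>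
           (\<forall>m\<in>Mk p k M. \<forall>\<delta>\<in>\<Delta>.
               \<bar>Qo Pr p x y (matvec k m \<delta>) - Qt Pr p x \<epsilon> (matvec k mo \<delta>o) (matvec k m \<delta>)\<bar>
                 \<le> C * vnorm p (\<lambda>i. \<beta> i - matvec k mo \<delta>o i) / sqrt (real p))
         \<and> (\<forall>m\<in>Mk p k M. \<forall>\<delta>\<in>\<Delta>. matvec k m \<delta> \<noteq> matvec k mo \<delta>o \<longrightarrow>
               Qt Pr p x \<epsilon> (matvec k mo \<delta>o) (matvec k mo \<delta>o)
                 < Qt Pr p x \<epsilon> (matvec k mo \<delta>o) (matvec k m \<delta>))"
proof (intro exI[of _ "(1 + B) * (Cb + 5 * C\<Delta>)"] allI impI)
  fix Pr :: "'a measure" and p k \<Delta> x \<epsilon> y \<beta> mo \<delta>o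
  assume H: "lin_model Pr p x \<epsilon> y \<beta> Cb B d
           \<and> 1 \<le> k \<and> k \<le> p
           \<and> (\<forall>\<delta>\<in>\<Delta>. \<forall>j<k. \<bar>\<delta> j\<bar> \<le> C\<Delta>)
           \<and> mo \<in> Mk p k M \<and> \<delta>o \<in> \<Delta>
           \<and> (\<forall>m\<in>Mk p k M. \<forall>\<delta>\<in>\<Delta>.
                 (\<Sum>i<p. (matvec k mo \<delta>o i - \<beta> i)\<^sup>2) \<le> (\<Sum>i<p. (matvec k m \<delta> i - \<beta> i)\<^sup>2))"
  then have lm: "lin_model Pr p x \<epsilon> y \<beta> Cb B d" and kp: "1 \<le> k" "k \<le> p"
    and dl: "\<forall>\<delta>\<in>\<Delta>. \<forall>j<k. \<bar>\<delta> j\<bar> \<le> C\<Delta>" and mo: "mo \<in> Mk p k M" and do: "\<delta>o \<in> \<Delta>"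
    by auto
  interpret LM Pr p x \<epsilon> y \<beta> Cb B d
    using lm assms by unfold_locales auto
  interpret prob_space Pr by (rule ps)
  have p0: "0 < p" using kp by simp
  have bet: "\<And>i. i < p \<Longrightarrow> \<bar>\<beta> i\<bar> \<le> Cb" using lm unfolding lin_model_def by blast
  define w where "w = matvec k mo \<delta>o"
  have wb: "\<And>i. i < p \<Longrightarrow> \<bar>w i\<bar> \<le> C\<Delta>" unfolding w_def using matvec_bd[OF mo] dl do by blast
  show "(\<forall>m\<in>Mk p k M. \<forall>\<delta>\<in>\<Delta>.
               \<bar>Qo Pr p x y (matvec k m \<delta>) - Qt Pr p x \<epsilon> (matvec k mo \<delta>o) (matvec k m \<delta>)\<bar>
                 \<le> (1 + B) * (Cb + 5 * C\<Delta>) * vnorm p (\<lambda>i. \<beta> i - matvec k mo \<delta>o i) / sqrt (real p))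
         \<and> (\<forall>m\<in>Mk p k M. \<forall>\<delta>\<in>\<Delta>. matvec k m \<delta> \<noteq> matvec k mo \<delta>o \<longrightarrow>
               Qt Pr p x \<epsilon> (matvec k mo \<delta>o) (matvec k mo \<delta>o)
                 < Qt Pr p x \<epsilon> (matvec k mo \<delta>o) (matvec k m \<delta>))"
    unfolding w_def[symmetric]
  proof (intro conjI ballI impI)
    fix m \<delta> assume m: "m \<in> Mk p k M" and dd: "\<delta> \<in> \<Delta>"
    define v where "v = matvec k m \<delta>"
    have vb: "\<And>i. i < p \<Longrightarrow> \<bar>v i\<bar> \<le> C\<Delta>" unfolding v_def using matvec_bd[OF m] dl dd by blast
    define b where "b = (\<lambda>i. \<beta> i - w i)"
    define c where "c = (\<lambda>i. w i - v i)"
    define nb where "nb = sqrt (nsq b)"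
    define nc where "nc = sqrt (nsq c)"
    have nb0: "0 \<le> nb" unfolding nb_def by (simp add: nsq_nonneg)
    have nc0: "0 \<le> nc" unfolding nc_def by (simp add: nsq_nonneg)
    have nbb: "nb \<le> sqrt (real p) * (Cb + C\<Delta>)"
      unfolding nb_def nsq_def b_def
    proof (rule nsq_bound)
      fix i assume "i < p"
      then have "\<bar>\<beta> i\<bar> \<le> Cb" "\<bar>w i\<bar> \<le> C\<Delta>" using bet wb by auto
      moreover have "\<bar>\<beta> i - w i\<bar> \<le> \<bar>\<beta> i\<bar> + \<bar>w i\<bar>" by (rule abs_triangle_ineq4)
      ultimately show "\<bar>\<beta> i - w i\<bar> \<le> Cb + C\<Delta>" by linarith
    qed
    have ncb: "nc \<le> sqrt (real p) * (2 * C\<Delta>)"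
      unfolding nc_def nsq_def c_def
    proof (rule nsq_bound)
      fix i assume "i < p"
      then have "\<bar>v i\<bar> \<le> C\<Delta>" "\<bar>w i\<bar> \<le> C\<Delta>" using vb wb by auto
      moreover have "\<bar>w i - v i\<bar> \<le> \<bar>w i\<bar> + \<bar>v i\<bar>" by (rule abs_triangle_ineq4)
      ultimately show "\<bar>w i - v i\<bar> \<le> 2 * C\<Delta>" by linarith
    qed
    have e1: "\<bar>\<integral>\<omega>. rowdot p (x \<omega>) b * rowdot p (x \<omega>) b \<partial>Pr\<bar> \<le> (1 + B) * (nb * nb)"
      unfolding nb_def by (rule cross)
    have e2: "\<bar>\<integral>\<omega>. rowdot p (x \<omega>) b * rowdot p (x \<omega>) c \<partial>Pr\<bar> \<le> (1 + B) * (nb * nc)"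
      unfolding nb_def nc_def by (rule cross)
    have dec: "Qo Pr p x y v - Qt Pr p x \<epsilon> w v = ((\<integral>\<omega>. rowdot p (x \<omega>) b * rowdot p (x \<omega>) b \<partial>Pr)
       + 2 * (\<integral>\<omega>. rowdot p (x \<omega>) b * rowdot p (x \<omega>) c \<partial>Pr)) / real p"
      unfolding b_def c_def by (rule decomp)
    have sp: "sqrt (real p) * sqrt (real p) = real p" by simp
    have spos: "0 < sqrt (real p)" using p0 by simp
    have "\<bar>Qo Pr p x y v - Qt Pr p x \<epsilon> w v\<bar> \<le> ((1 + B) * (nb * nb) + 2 * ((1 + B) * (nb * nc))) / real p"
    proof -
      let ?X = "\<integral>\<omega>. rowdot p (x \<omega>) b * rowdot p (x \<omega>) b \<partial>Pr"
      let ?Y = "\<integral>\<omega>. rowdot p (x \<omega>) b * rowdot p (x \<omega>) c \<partial>Pr"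
      have "\<bar>(?X + 2 * ?Y) / real p\<bar> = \<bar>?X + 2 * ?Y\<bar> / real p" by simp
      also have "\<dots> \<le> ((1 + B) * (nb * nb) + 2 * ((1 + B) * (nb * nc))) / real p"
        by (rule divide_right_mono) (use e1 e2 in \<open>linarith\<close>, simp)
      finally show ?thesis unfolding dec .
    qed
    also have "\<dots> = (1 + B) * nb * (nb + 2 * nc) / real p" by (simp add: algebra_simps)
    also have "\<dots> \<le> (1 + B) * nb * (sqrt (real p) * (Cb + 5 * C\<Delta>)) / real p"
    proof -
      have "nb + 2 * nc \<le> sqrt (real p) * (Cb + 5 * C\<Delta>)" using nbb ncb by (simp add: algebra_simps)
      then show ?thesis using nb0 \<open>0 < B\<close> p0
        by (intro divide_right_mono mult_left_mono) auto
    qed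
    also have "\<dots> = (1 + B) * (Cb + 5 * C\<Delta>) * nb * sqrt (real p) / (sqrt (real p) * sqrt (real p))"
      unfolding sp by (simp add: algebra_simps)
    also have "\<dots> = (1 + B) * (Cb + 5 * C\<Delta>) * nb / sqrt (real p)"
      by (rule cancel_s[OF spos])
    finally show "\<bar>Qo Pr p x y v - Qt Pr p x \<epsilon> w v\<bar>
        \<le> (1 + B) * (Cb + 5 * C\<Delta>) * vnorm p (\<lambda>i. \<beta> i - w i) / sqrt (real p)"
      unfolding vnorm_nsq nb_def b_def .
  next
    fix m \<delta> assume m: "m \<in> Mk p k M" and dd: "\<delta> \<in> \<Delta>" and ne: "matvec k m \<delta> \<noteq> w"
    define v where "v = matvec k m \<delta>"
    obtain i where i: "v i \<noteq> w i" using ne unfolding v_def by (metis ext)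
    have ip: "i < p"
    proof (rule ccontr)
      assume "\<not> i < p"
      then have "v i = 0" "w i = 0" unfolding v_def w_def using matvec_out[OF m] matvec_out[OF mo] by simp_all
      with i show False by simp
    qed
    define a where "a = (\<lambda>i. v i - w i)"
    have "0 < nsq a"
      unfolding nsq_def
    proof (rule sum_pos2[of _ i])
      show "(a i)\<^sup>2 > 0" using i unfolding a_def by simp
    qed (use ip in auto)
    then have qp: "0 < (\<integral>\<omega>. (rowdot p (x \<omega>) a)\<^sup>2 \<partial>Pr)" by (rule quad_pos)
    have g: "(\<Sum>i<p. \<Sum>j<p. (v i - w i) * (\<integral>\<omega>. x \<omega> i * x \<omega> j \<partial>Pr) * (v j - w j))
        = (\<integral>\<omega>. (rowdot p (x \<omega>) a)\<^sup>2 \<partial>Pr)"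
      unfolding a_def power2_eq_square by (rule gram[symmetric])
    show "Qt Pr p x \<epsilon> w w < Qt Pr p x \<epsilon> w (matvec k m \<delta>)"
      unfolding v_def[symmetric] Qt_def g using qp p0 by (intro add_strict_right_mono divide_strict_right_mono) simp_all
  qed
qed

end
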